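(* Let $G$ be a finitely generated, torsion-free, residually finite group and $F$ a group generated by its torsion elements. Then $\operatorname{Spec}_R(G\times F)=\operatorname{Spec}_R(G)\cdot\operatorname{Spec}_R(F)$.
   Context: $R(\psi)$ is the Reidemeister number of an endomorphism $\psi$ of a group $A$ (number of classes of $x\sim gx\psi(g)^{-1}$), $\operatorname{Spec}_R(A)=\{R(\psi)\mid\psi\in\operatorname{Aut}(A)\}$, and for $S,T\subseteq\mathbb{N}\cup\{\infty\}$, $S\cdot T=\{st\mid s\in S,t\in T\}$ with $a\cdot\infty=\infty$. *)

theory Defs
  imports "HOL-Algebra.Algebra" "HOL-Library.Extended_Nat"
begin

definition reid_rel :: "('a, 'b) monoid_scheme \<Rightarrow> ('a \<Rightarrow> 'a) \<Rightarrow> ('a \<times> 'a) set" where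
  "reid_rel G \<psi> = {(x, y). x \<in> carrier G \<and> y \<in> carrier G \<and>
      (\<exists>g \<in> carrier G. y = g \<otimes>\<^bsub>G\<^esub> x \<otimes>\<^bsub>G\<^esub> inv\<^bsub>G\<^esub> (\<psi> g))}"

definition reid_classes :: "('a, 'b) monoid_scheme \<Rightarrow> ('a \<Rightarrow> 'a) \<Rightarrow> 'a set set" where
  "reid_classes G \<psi> = carrier G // reid_rel G \<psi>"

definition reid_number :: "('a, 'b) monoid_scheme \<Rightarrow> ('a \<Rightarrow> 'a) \<Rightarrow> enat" where
  "reid_number G \<psi> = (if finite (reid_classes G \<psi>) then enat (card (reid_classes G \<psi>)) else \<infinity>)"

definition spec_R :: "('a, 'b) monoid_scheme \<Rightarrow> enat set" where
  "spec_R G = reid_number G ` {\<psi>. \<psi> \<in> iso G G}"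

(* S \<cdot> T = {st}, with a \<cdot> \<infinity> = \<infinity> (all values involved are \<ge> 1) *)
definition set_prod :: "enat set \<Rightarrow> enat set \<Rightarrow> enat set" where
  "set_prod S T = {s * t | s t. s \<in> S \<and> t \<in> T}"

definition fin_gen_group :: "('a, 'b) monoid_scheme \<Rightarrow> bool" where
  "fin_gen_group G \<longleftrightarrow> (\<exists>A. finite A \<and> A \<subseteq> carrier G \<and> generate G A = carrier G)"

definition torsion_elems :: "('a, 'b) monoid_scheme \<Rightarrow> 'a set" where
  "torsion_elems G = {x \<in> carrier G. \<exists>n::nat. n > 0 \<and> x [^]\<^bsub>G\<^esub> n = \<one>\<^bsub>G\<^esub>}"

definition torsion_free :: "('a, 'b) monoid_scheme \<Rightarrow> bool" where
  "torsion_free G \<longleftrightarrow> torsion_elems G = {\<one>\<^bsub>G\<^esub>}"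

definition residually_finite :: "('a, 'b) monoid_scheme \<Rightarrow> bool" where
  "residually_finite G \<longleftrightarrow> (\<forall>x \<in> carrier G. x \<noteq> \<one>\<^bsub>G\<^esub> \<longrightarrow>
     (\<exists>N. N \<lhd> G \<and> finite (rcosets\<^bsub>G\<^esub> N) \<and> x \<notin> N))"

end

theory Submission
  imports Defs Complex_Main
begin


lemma (in group) reid_equiv:
  assumes "\<alpha> \<in> hom G G"
  shows "equiv (carrier G) (reid_rel G \<alpha>)"
proof -
  interpret h: group_hom G G \<alpha> using assms by (simp add: group_hom_def group_hom_axioms_def is_group)
  show ?thesis
  proof (rule equivI)
    show "reid_rel G \<alpha> \<subseteq> carrier G \<times> carrier G" unfolding reid_rel_def by auto
    show "refl_on (carrier G) (reid_rel G \<alpha>)"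
      unfolding refl_on_def reid_rel_def
      by (auto intro!: bexI[of _ \<one>])
    show "sym (reid_rel G \<alpha>)"
    proof (rule symI)
      fix x y assume "(x,y) \<in> reid_rel G \<alpha>"
      then obtain g where g: "g \<in> carrier G" "x \<in> carrier G" "y \<in> carrier G"
         "y = g \<otimes> x \<otimes> inv (\<alpha> g)" unfolding reid_rel_def by auto
      have "x = inv g \<otimes> y \<otimes> inv (\<alpha> (inv g))"
        using g by (simp add: m_assoc h.hom_inv) (simp add: m_assoc[symmetric])
      then show "(y,x) \<in> reid_rel G \<alpha>" using g unfolding reid_rel_def by (auto intro!: bexI[of _ "inv g"])
    qed
    show "trans (reid_rel G \<alpha>)"
    proof (rule transI)
      fix x y z assume "(x,y) \<in> reid_rel G \<alpha>" "(y,z) \<in> reid_rel G \<alpha>"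
      then obtain g g' where g: "g \<in> carrier G" "x \<in> carrier G" "y \<in> carrier G" "z \<in> carrier G"
         "y = g \<otimes> x \<otimes> inv (\<alpha> g)" "g' \<in> carrier G" "z = g' \<otimes> y \<otimes> inv (\<alpha> g')"
        unfolding reid_rel_def by auto
      have "z = (g' \<otimes> g) \<otimes> x \<otimes> inv (\<alpha> (g' \<otimes> g))"
        using g by (simp add: m_assoc inv_mult_group)
      then show "(x,z) \<in> reid_rel G \<alpha>" using g unfolding reid_rel_def by (auto intro!: bexI[of _ "g' \<otimes> g"])
    qed
  qed
qed



fun egb :: "nat \<Rightarrow> nat \<Rightarrow> nat" where
  "egb 0 b = 0"
| "egb (Suc k) b = Suc k * b + egb k (Suc k * b * b)"

lemma egb_mono: "b \<le> b' \<Longrightarrow> egb k b \<le> egb k b'"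
proof (induction k arbitrary: b b')
  case 0 then show ?case by simp
next
  case (Suc k)
  have "Suc k * b \<le> Suc k * b'" using Suc.prems by (rule mult_le_mono2)
  then have "Suc k * b * b \<le> Suc k * b' * b'" using Suc.prems by (rule mult_le_mono)
  then have e: "egb k (Suc k * b * b) \<le> egb k (Suc k * b' * b')" using Suc.IH by blast
  show ?case by (simp only: egb.simps) (rule add_mono[OF mult_le_mono2[OF Suc.prems] e])
qed

lemma egyptian:
  assumes "finite I" "card I = k" "\<forall>i\<in>I. s i > (0::nat)" "b > 0"
    "(\<Sum>i\<in>I. 1 / real (s i)) = real a / real b"
  shows "\<forall>i\<in>I. s i \<le> egb k b"
  using assms
proof (induction k arbitrary: I a b)
  case 0 then show ?case by simp
next
  case (Suc k)
  have ne: "I \<noteq> {}" using Suc.prems by auto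
  have "Min (s ` I) \<in> s ` I" using Suc.prems(1) ne by simp
  then obtain m where m1: "m \<in> I" "s m = Min (s ` I)" by auto
  have m: "m \<in> I" "\<forall>i\<in>I. s m \<le> s i" using m1 Suc.prems(1) by auto
  have sm: "s m > 0" using m Suc.prems by auto
  have le: "(\<Sum>i\<in>I. 1 / real (s i)) \<le> (\<Sum>i\<in>I. 1 / real (s m))"
    apply (rule sum_mono) using m sm by (simp add: frac_le)
  then have "real a / real b \<le> real (Suc k) / real (s m)" using Suc.prems by simp
  have pos: "(\<Sum>i\<in>I. 1 / real (s i)) > 0"
    using ne Suc.prems by (intro sum_pos) auto
  then have apos: "a > 0" using Suc.prems by (cases a) auto
  from \<open>real a / real b \<le> real (Suc k) / real (s m)\<close>
  have "real a * real (s m) \<le> real (Suc k) * real b"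
    using sm Suc.prems(4) by (simp add: divide_simps)
  then have "real (a * s m) \<le> real (Suc k * b)" by (simp only: of_nat_mult)
  then have "a * s m \<le> Suc k * b" by (simp only: of_nat_le_iff)
  moreover have "s m \<le> a * s m" using apos by simp
  ultimately have smb: "s m \<le> Suc k * b" by linarith
  have rest: "(\<Sum>i\<in>I-{m}. 1 / real (s i)) = real a / real b - 1 / real (s m)"
    using Suc.prems(1,5) m(1) by (simp add: sum_diff1)
  have restnn: "(\<Sum>i\<in>I-{m}. 1 / real (s i)) \<ge> 0" by (intro sum_nonneg) auto
  then have "1 / real (s m) \<le> real a / real b" using rest by simp
  then have "real b \<le> real a * real (s m)" using sm Suc.prems(4) by (simp add: divide_simps)
  then have "real b \<le> real (a * s m)" by (simp only: of_nat_mult)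
  then have bas: "b \<le> a * s m" by (simp only: of_nat_le_iff)
  have rest2: "(\<Sum>i\<in>I-{m}. 1 / real (s i)) = real (a * s m - b) / real (b * s m)"
    using rest bas sm Suc.prems(4) by (simp add: of_nat_diff divide_simps)
  have IH: "\<forall>i\<in>I-{m}. s i \<le> egb k (b * s m)"
    apply (rule Suc.IH[OF _ _ _ _ rest2])
    using Suc.prems m sm by auto
  have "egb k (b * s m) \<le> egb k (Suc k * b * b)"
    apply (rule egb_mono) using smb by (simp add: mult.commute mult_le_mono)
  then have e2: "\<forall>i\<in>I-{m}. s i \<le> egb k (Suc k * b * b)" using IH by (meson le_trans)
  show ?case
  proof
    fix i assume i: "i \<in> I"
    show "s i \<le> egb (Suc k) b"
    proof (cases "i = m")
      case True then show ?thesis using smb by (simp only: egb.simps)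
    next
      case False then have "s i \<le> egb k (Suc k * b * b)" using e2 i by blast
      then show ?thesis by (simp only: egb.simps)
    qed
  qed
qed



definition tw :: "('a, 'b) monoid_scheme \<Rightarrow> ('a \<Rightarrow> 'a) \<Rightarrow> 'a \<Rightarrow> 'a \<Rightarrow> 'a" where
  "tw G \<phi> g = (\<lambda>y \<in> carrier G. g \<otimes>\<^bsub>G\<^esub> y \<otimes>\<^bsub>G\<^esub> inv\<^bsub>G\<^esub> (\<phi> g))"

definition EB :: "nat \<Rightarrow> nat" where "EB r = (\<Sum>k\<le>r. egb k 1)"

lemma EB_ge: "k \<le> r \<Longrightarrow> egb k 1 \<le> EB r"
  unfolding EB_def by (rule member_le_sum) auto

lemma (in group) tw_action:
  assumes "\<phi> \<in> hom G G"
  shows "group_action G (carrier G) (tw G \<phi>)"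
proof -
  interpret h: group_hom G G \<phi> using assms by (simp add: group_hom_def group_hom_axioms_def is_group)
  have bij: "tw G \<phi> g \<in> Bij (carrier G)" if g: "g \<in> carrier G" for g
  proof -
    have "bij_betw (tw G \<phi> g) (carrier G) (carrier G)"
    proof (rule bij_betwI[where g="tw G \<phi> (inv g)"])
      show "tw G \<phi> g \<in> carrier G \<rightarrow> carrier G" using g by (auto simp: tw_def)
      show "tw G \<phi> (inv g) \<in> carrier G \<rightarrow> carrier G" using g by (auto simp: tw_def)
      show "tw G \<phi> (inv g) (tw G \<phi> g x) = x" if "x \<in> carrier G" for x
        using g that by (simp add: tw_def m_assoc h.hom_inv) (simp add: m_assoc[symmetric])
      show "tw G \<phi> g (tw G \<phi> (inv g) x) = x" if "x \<in> carrier G" for x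
        using g that by (simp add: tw_def m_assoc h.hom_inv) (simp add: m_assoc[symmetric])
    qed
    then show ?thesis unfolding Bij_def by (auto simp: tw_def)
  qed
  have "tw G \<phi> \<in> hom G (BijGroup (carrier G))"
  proof (rule homI)
    show "tw G \<phi> x \<in> carrier (BijGroup (carrier G))" if "x \<in> carrier G" for x
      using bij[OF that] by (simp add: BijGroup_def)
    show "tw G \<phi> (x \<otimes> y) = tw G \<phi> x \<otimes>\<^bsub>BijGroup (carrier G)\<^esub> tw G \<phi> y"
      if "x \<in> carrier G" "y \<in> carrier G" for x y
      using that bij[OF that(1)] bij[OF that(2)]
      by (auto simp: BijGroup_def compose_def tw_def m_assoc inv_mult_group fun_eq_iff)
  qed
  then show ?thesis
    unfolding group_action_def group_hom_def group_hom_axioms_def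
    using is_group group_BijGroup by blast
qed

lemma (in group) landau:
  assumes fin: "finite (carrier G)" and hom: "\<phi> \<in> hom G G" and x: "x \<in> carrier G"
    and r: "card (orbits G (carrier G) (tw G \<phi>)) \<le> r"
  shows "card (stabilizer G (tw G \<phi>) x) \<le> EB r"
proof -
  interpret A: group_action G "carrier G" "tw G \<phi>" using tw_action[OF hom] .
  define Orb where "Orb = orbits G (carrier G) (tw G \<phi>)"
  have finO: "finite Orb" unfolding Orb_def
    using A.orbits_coverture fin by (metis finite_UnionD)
  have orbO: "\<exists>y\<in>carrier G. Ob = orbit G (tw G \<phi>) y" if Obm: "Ob \<in> Orb" for Ob
    using that unfolding Orb_def orbits_def by auto
  have cardO_pos: "card Ob > 0" if Obm: "Ob \<in> Orb" for Ob
  proof -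
    obtain y where y: "y \<in> carrier G" "Ob = orbit G (tw G \<phi>) y" using orbO[OF Obm] by blast
    have "y \<in> Ob" using A.orbit_refl y by simp
    moreover have "finite Ob" using that A.orbits_coverture fin unfolding Orb_def
      by (metis Union_upper finite_subset)
    ultimately show ?thesis by (auto simp: card_gt_0_iff)
  qed
  define s where "s (Ob::'a set) = order G div card Ob" for Ob
  have s_eq: "s Ob = card (stabilizer G (tw G \<phi>) y)" if "Ob \<in> Orb" "y \<in> carrier G"
     "Ob = orbit G (tw G \<phi>) y" for Ob y
    using A.orbit_stabilizer_theorem[OF that(2)] cardO_pos[OF that(1)] that(3)
    unfolding s_def by (metis div_mult_self1_is_m)
  have s_mult: "real (s Ob) * real (card Ob) = real (order G)" if Obm: "Ob \<in> Orb" for Ob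
  proof -
    obtain y where y: "y \<in> carrier G" "Ob = orbit G (tw G \<phi>) y" using orbO[OF Obm] by blast
    show ?thesis using s_eq[OF that y] A.orbit_stabilizer_theorem[OF y(1)] y(2)
      by (metis mult.commute of_nat_mult)
  qed
  have ordpos: "order G > 0" using fin unfolding order_def by (auto simp: card_gt_0_iff)
  have spos: "\<forall>Ob\<in>Orb. s Ob > 0"
    using s_mult ordpos cardO_pos by (metis mult_eq_0_iff not_gr0 of_nat_0 of_nat_0_less_iff)
  have sum1: "(\<Sum>Ob\<in>Orb. card Ob) = order G"
    using A.disjoint_sum[OF fin, of "\<lambda>_. (1::nat)"] unfolding Orb_def order_def by simp
  have "(\<Sum>Ob\<in>Orb. 1 / real (s Ob)) = (\<Sum>Ob\<in>Orb. real (card Ob) / real (order G))"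
  proof (rule sum.cong)
    fix Ob assume Ob: "Ob \<in> Orb"
    show "1 / real (s Ob) = real (card Ob) / real (order G)"
      using s_mult[OF Ob] spos Ob ordpos by (simp add: divide_simps) (metis mult.commute)
  qed simp
  also have "\<dots> = real (\<Sum>Ob\<in>Orb. card Ob) / real (order G)"
    by (simp add: sum_divide_distrib)
  also have "\<dots> = real 1 / real 1" using sum1 ordpos by simp
  finally have eq: "(\<Sum>Ob\<in>Orb. 1 / real (s Ob)) = real 1 / real 1" .
  have bound: "\<forall>Ob\<in>Orb. s Ob \<le> egb (card Orb) 1"
    by (rule egyptian[OF finO refl spos _ eq]) simp
  have xO: "orbit G (tw G \<phi>) x \<in> Orb" using x unfolding Orb_def orbits_def by auto
  have "card (stabilizer G (tw G \<phi>) x) = s (orbit G (tw G \<phi>) x)"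
    using s_eq[OF xO x refl] by simp
  also have "\<dots> \<le> egb (card Orb) 1" using bound xO by blast
  also have "\<dots> \<le> EB r" using r unfolding Orb_def by (rule EB_ge)
  finally show ?thesis .
qed



lemma hom_agree_gen:
  assumes G: "group G" and M: "group M" and r: "\<rho> \<in> hom G M" "\<rho>' \<in> hom G M"
    and A: "A \<subseteq> carrier G" and agree: "\<forall>a\<in>A. \<rho> a = \<rho>' a" and x: "x \<in> generate G A"
  shows "\<rho> x = \<rho>' x"
  using x
proof (induction x rule: generate.induct)
  case one
  then show ?case using G M r by (simp add: group_hom_def group_hom_axioms_def group_hom.hom_one)
next
  case (incl h) then show ?case using agree by blast
next
  case (inv h)
  then have "h \<in> carrier G" using A by blast
  then show ?case using G M r agree inv
    by (simp add: group_hom_def group_hom_axioms_def group_hom.hom_inv)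
next
  case (eng h1 h2)
  have "h1 \<in> carrier G" "h2 \<in> carrier G"
    using eng.hyps group.generate_in_carrier[OF G A] by auto
  then show ?case using r eng.IH by (simp add: hom_mult)
qed

lemma (in group) kernel_normal:
  fixes M :: "'s \<Rightarrow> ('c, 'd) monoid_scheme" and R :: "'s \<Rightarrow> ('a \<Rightarrow> 'c) set"
  assumes grp: "\<And>s. s \<in> S \<Longrightarrow> group (M s)" and RH: "\<And>s. s \<in> S \<Longrightarrow> R s \<subseteq> hom G (M s)"
  shows "{g \<in> carrier G. \<forall>s\<in>S. \<forall>\<rho>\<in>R s. \<rho> g = \<one>\<^bsub>M s\<^esub>} \<lhd> G"
proof -
  let ?K = "{g \<in> carrier G. \<forall>s\<in>S. \<forall>\<rho>\<in>R s. \<rho> g = \<one>\<^bsub>M s\<^esub>}"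
  have gh: "group_hom G (M s) \<rho>" if "s \<in> S" "\<rho> \<in> R s" for s \<rho>
    using grp[OF that(1)] RH[OF that(1)] that(2) is_group
    by (auto simp: group_hom_def group_hom_axioms_def)
  have sub: "subgroup ?K G"
  proof (rule subgroupI)
    show "?K \<subseteq> carrier G" by blast
    show "?K \<noteq> {}" using gh by (auto intro!: exI[of _ \<one>] simp: group_hom.hom_one)
    show "inv a \<in> ?K" if a: "a \<in> ?K" for a
    proof (intro CollectI conjI ballI)
      show "inv a \<in> carrier G" using a by auto
      fix s \<rho> assume s: "s \<in> S" and r: "\<rho> \<in> R s"
      interpret gh: group_hom G "M s" \<rho> using gh[OF s r] .
      have "\<rho> a = \<one>\<^bsub>M s\<^esub>" using a s r by auto
      then show "\<rho> (inv a) = \<one>\<^bsub>M s\<^esub>" using a by (simp add: gh.hom_inv)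
    qed
    show "a \<otimes> b \<in> ?K" if a: "a \<in> ?K" and b: "b \<in> ?K" for a b
    proof (intro CollectI conjI ballI)
      show "a \<otimes> b \<in> carrier G" using a b by auto
      fix s \<rho> assume s: "s \<in> S" and r: "\<rho> \<in> R s"
      interpret gh: group_hom G "M s" \<rho> using gh[OF s r] .
      have "\<rho> a = \<one>\<^bsub>M s\<^esub>" "\<rho> b = \<one>\<^bsub>M s\<^esub>" using a b s r by auto
      then show "\<rho> (a \<otimes> b) = \<one>\<^bsub>M s\<^esub>" using a b by (simp add: gh.hom_mult)
    qed
  qed
  show ?thesis unfolding normal_inv_iff
  proof (intro conjI sub ballI)
    fix x h assume x: "x \<in> carrier G" and h: "h \<in> ?K"
    show "x \<otimes> h \<otimes> inv x \<in> ?K"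
    proof (intro CollectI conjI ballI)
      show "x \<otimes> h \<otimes> inv x \<in> carrier G" using x h by auto
      fix s \<rho> assume s: "s \<in> S" and r: "\<rho> \<in> R s"
      interpret gh: group_hom G "M s" \<rho> using gh[OF s r] .
      have "\<rho> h = \<one>\<^bsub>M s\<^esub>" using h s r by auto
      then show "\<rho> (x \<otimes> h \<otimes> inv x) = \<one>\<^bsub>M s\<^esub>"
        using x h by (simp add: gh.hom_inv)
    qed
  qed
qed

lemma (in group) sep_subgroup:
  assumes fg: "fin_gen_group G" and rf: "residually_finite G" and S: "finite S" "S \<subseteq> carrier G"
    "\<one> \<notin> S" and hom: "\<alpha> \<in> hom G G"
  shows "\<exists>K. K \<lhd> G \<and> finite (rcosets K) \<and> (\<forall>k\<in>K. \<alpha> k \<in> K) \<and> S \<inter> K = {}"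
proof -
  have "\<forall>s\<in>S. \<exists>N. N \<lhd> G \<and> finite (rcosets N) \<and> s \<notin> N"
  proof
    fix s assume s: "s \<in> S"
    then have "s \<in> carrier G" "s \<noteq> \<one>" using S by auto
    then show "\<exists>N. N \<lhd> G \<and> finite (rcosets N) \<and> s \<notin> N"
      using rf unfolding residually_finite_def by blast
  qed
  then obtain Nf where Nf: "\<And>s. s \<in> S \<Longrightarrow> Nf s \<lhd> G \<and> finite (rcosets (Nf s)) \<and> s \<notin> Nf s"
    by metis
  obtain A where A: "finite A" "A \<subseteq> carrier G" "generate G A = carrier G"
    using fg unfolding fin_gen_group_def by blast
  define M where "M s = G Mod Nf s" for s
  define R where "R s = hom G (M s)" for s
  define K where "K = {g \<in> carrier G. \<forall>s\<in>S. \<forall>\<rho>\<in>R s. \<rho> g = \<one>\<^bsub>M s\<^esub>}"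
  have grpM: "group (M s)" if "s \<in> S" for s
    using Nf[OF that] normal.factorgroup_is_group unfolding M_def by blast
  have gh: "group_hom G (M s) \<rho>" if "s \<in> S" "\<rho> \<in> R s" for s \<rho>
    using grpM[OF that(1)] that(2) is_group
    by (auto simp: group_hom_def group_hom_axioms_def R_def)
  have normK: "K \<lhd> G" unfolding K_def
    by (rule kernel_normal[OF grpM]) (auto simp: R_def)
  have invK: "\<forall>k\<in>K. \<alpha> k \<in> K"
  proof
    fix k assume k: "k \<in> K"
    have "\<alpha> k \<in> carrier G" using k hom unfolding K_def by (auto simp: hom_def)
    moreover have "\<rho> (\<alpha> k) = \<one>\<^bsub>M s\<^esub>" if "s \<in> S" "\<rho> \<in> R s" for s \<rho>
    proof -
      have "\<rho> \<circ> \<alpha> \<in> R s" using that hom unfolding R_def by (metis Group.hom_compose)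
      then show ?thesis using k that unfolding K_def by auto
    qed
    ultimately show "\<alpha> k \<in> K" unfolding K_def by auto
  qed
  have disj: "S \<inter> K = {}"
  proof (rule ccontr)
    assume "S \<inter> K \<noteq> {}"
    then obtain s where s: "s \<in> S" "s \<in> K" by blast
    interpret N: normal "Nf s" G using Nf[OF s(1)] by blast
    have hR: "(\<lambda>a. Nf s #> a) \<in> R s" unfolding R_def M_def by (rule N.r_coset_hom_Mod)
    have "\<forall>s'\<in>S. \<forall>\<rho>\<in>R s'. \<rho> s = \<one>\<^bsub>M s'\<^esub>" using s(2) unfolding K_def by blast
    then have "(\<lambda>a. Nf s #> a) s = \<one>\<^bsub>M s\<^esub>" using hR s(1) by blast
    then have "Nf s #> s = Nf s" unfolding M_def by simp
    moreover have "s \<in> carrier G" using s(1) S(2) by blast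
    ultimately have "s \<in> Nf s" using coset_join1 N.subgroup_axioms by blast
    then show False using Nf[OF s(1)] by blast
  qed
  have finK: "finite (rcosets K)"
  proof -
    define U where "U = (\<Union>s\<in>S. carrier (M s))"
    have finU: "finite U" unfolding U_def using S(1) Nf
      by (auto simp: M_def FactGroup_def)
    define T where "T = {(s, restrict \<rho> (carrier G)) | s \<rho>. s \<in> S \<and> \<rho> \<in> R s}"
    have injT: "inj_on (\<lambda>(s, r). (s, restrict r A)) T"
    proof (rule inj_onI)
      fix t t' assume t: "t \<in> T" and t': "t' \<in> T"
        and eq: "(\<lambda>(s, r). (s, restrict r A)) t = (\<lambda>(s, r). (s, restrict r A)) t'"
      obtain s \<rho> where sr: "t = (s, restrict \<rho> (carrier G))" "s \<in> S" "\<rho> \<in> R s" using t T_def by blast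
      obtain s' \<rho>' where sr': "t' = (s', restrict \<rho>' (carrier G))" "s' \<in> S" "\<rho>' \<in> R s'" using t' T_def by blast
      have ss: "s' = s" using eq sr sr' by simp
      have agree: "\<forall>a\<in>A. \<rho> a = \<rho>' a"
      proof
        fix a assume a: "a \<in> A"
        have "restrict (restrict \<rho> (carrier G)) A a = restrict (restrict \<rho>' (carrier G)) A a"
          using eq sr sr' by simp
        then show "\<rho> a = \<rho>' a" using a A(2) by auto
      qed
      have "\<rho> x = \<rho>' x" if "x \<in> carrier G" for x
        using hom_agree_gen[OF is_group grpM[OF sr(2)], of \<rho> \<rho>' A x] sr(3) sr'(3) ss A agree that
        unfolding R_def by auto
      then have "restrict \<rho> (carrier G) = restrict \<rho>' (carrier G)" by (intro restrict_ext) auto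
      then show "t = t'" using sr sr' ss by auto
    qed
    have "(\<lambda>(s, r). (s, restrict r A)) ` T \<subseteq> S \<times> (A \<rightarrow>\<^sub>E U)"
    proof
      fix y assume "y \<in> (\<lambda>(s, r). (s, restrict r A)) ` T"
      then obtain s \<rho> where y: "y = (s, restrict (restrict \<rho> (carrier G)) A)" "s \<in> S" "\<rho> \<in> R s"
        unfolding T_def by auto
      have "\<rho> a \<in> U" if "a \<in> A" for a
        using y that A(2) unfolding R_def U_def by (auto simp: hom_def)
      then show "y \<in> S \<times> (A \<rightarrow>\<^sub>E U)" using y A(2) by auto
    qed
    moreover have "finite (S \<times> (A \<rightarrow>\<^sub>E U))" using S(1) A(1) finU by (simp add: finite_PiE)
    ultimately have finT: "finite T"
      using injT by (metis finite_imageD finite_subset)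
    define sig where "sig g = (\<lambda>t\<in>T. snd t g)" for g
    have sigU: "sig g \<in> T \<rightarrow>\<^sub>E U" if "g \<in> carrier G" for g
    proof -
      have "snd t g \<in> U" if "t \<in> T" for t
        using that \<open>g \<in> carrier G\<close> unfolding T_def R_def U_def by (fastforce simp: hom_def Pi_iff)
      then show ?thesis unfolding sig_def by auto
    qed
    have sigeq: "K #> g = K #> g'" if "g \<in> carrier G" "g' \<in> carrier G" "sig g = sig g'" for g g'
    proof -
      have "g \<otimes> inv g' \<in> K" unfolding K_def
      proof (intro CollectI conjI ballI)
        show "g \<otimes> inv g' \<in> carrier G" using that by auto
        fix s \<rho> assume s: "s \<in> S" and r: "\<rho> \<in> R s"
        interpret gh: group_hom G "M s" \<rho> using gh[OF s r] .
        have "(s, restrict \<rho> (carrier G)) \<in> T" using s r unfolding T_def by auto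
        moreover have "sig g (s, restrict \<rho> (carrier G)) = sig g' (s, restrict \<rho> (carrier G))"
          using that(3) by simp
        ultimately have "restrict \<rho> (carrier G) g = restrict \<rho> (carrier G) g'"
          unfolding sig_def by simp
        then have "\<rho> g = \<rho> g'" using that(1,2) by simp
        then show "\<rho> (g \<otimes> inv g') = \<one>\<^bsub>M s\<^esub>" using that by (simp add: gh.hom_inv)
      qed
      then have "g \<in> K #> g'" using normK that
        by (simp add: normal_def subgroup.rcos_module[OF _ is_group])
      then show ?thesis using repr_independence normK that(2)
        by (simp add: normal_def)
    qed
    define pick where "pick \<sigma> = (SOME g. g \<in> carrier G \<and> sig g = \<sigma>)" for \<sigma>
    have "rcosets K \<subseteq> (\<lambda>\<sigma>. K #> pick \<sigma>) ` (T \<rightarrow>\<^sub>E U)"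
    proof
      fix C assume "C \<in> rcosets K"
      then obtain g where g: "g \<in> carrier G" "C = K #> g" unfolding RCOSETS_def by auto
      have p: "pick (sig g) \<in> carrier G \<and> sig (pick (sig g)) = sig g"
        unfolding pick_def by (rule someI[of _ g]) (use g in auto)
      have "C = K #> pick (sig g)" using sigeq[of g "pick (sig g)"] g p by auto
      then show "C \<in> (\<lambda>\<sigma>. K #> pick \<sigma>) ` (T \<rightarrow>\<^sub>E U)" using sigU[OF g(1)] by blast
    qed
    moreover have "finite (T \<rightarrow>\<^sub>E U)" using finT finU by (simp add: finite_PiE)
    ultimately show ?thesis by (meson finite_imageI finite_subset)
  qed
  show ?thesis using normK finK invK disj by blast
qed



lemma (in group) pow_stab:
  assumes hom: "\<alpha> \<in> hom G G" and x: "x \<in> carrier G" and h: "h \<in> carrier G"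
    and st: "h \<otimes> x \<otimes> inv (\<alpha> h) = x"
  shows "h [^] (j::nat) \<otimes> x \<otimes> inv (\<alpha> (h [^] j)) = x"
proof (induction j)
  case 0
  have "\<alpha> \<one> = \<one>" using hom by (simp add: group_hom.hom_one group_hom_def group_hom_axioms_def is_group)
  then show ?case using x by simp
next
  case (Suc j)
  have hj: "h [^] j \<in> carrier G" using h by simp
  have "\<alpha> (h [^] Suc j) = \<alpha> (h [^] j) \<otimes> \<alpha> h" using hom h hj by (simp add: hom_mult)
  moreover have "\<alpha> (h [^] j) \<in> carrier G" "\<alpha> h \<in> carrier G" using hom h hj by (auto simp: hom_def)
  ultimately have "h [^] Suc j \<otimes> x \<otimes> inv (\<alpha> (h [^] Suc j))
      = h [^] j \<otimes> (h \<otimes> x \<otimes> inv (\<alpha> h)) \<otimes> inv (\<alpha> (h [^] j))"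
    using h hj x by (simp add: m_assoc inv_mult_group)
  also have "\<dots> = x" using st Suc.IH by simp
  finally show ?case .
qed

lemma (in group) stab_trivial:
  assumes fg: "fin_gen_group G" and rf: "residually_finite G" and tf: "torsion_free G"
    and hom: "\<alpha> \<in> hom G G" and fin: "finite (reid_classes G \<alpha>)"
    and x: "x \<in> carrier G" and h: "h \<in> carrier G" and st: "h \<otimes> x \<otimes> inv (\<alpha> h) = x"
  shows "h = \<one>"
proof (rule ccontr)
  assume h1: "h \<noteq> \<one>"
  define r where "r = card (reid_classes G \<alpha>)"
  define B where "B = EB r"
  define S where "S = (\<lambda>j. h [^] (j::nat)) ` {1..B}"
  have powne: "h [^] j \<noteq> \<one>" if "j > 0" for j :: nat
  proof
    assume "h [^] j = \<one>"
    then have "h \<in> torsion_elems G" using that h unfolding torsion_elems_def by auto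
    then show False using tf h1 unfolding torsion_free_def by auto
  qed
  have S3: "\<one> \<notin> S"
  proof
    assume "\<one> \<in> S"
    then obtain j where "j \<in> {1..B}" "\<one> = h [^] j" unfolding S_def by blast
    then show False using powne[of j] by simp
  qed
  have S: "finite S" "S \<subseteq> carrier G" "\<one> \<notin> S" using h S3 unfolding S_def by auto
  obtain K where K: "K \<lhd> G" "finite (rcosets K)" "\<forall>k\<in>K. \<alpha> k \<in> K" "S \<inter> K = {}"
    using sep_subgroup[OF fg rf S hom] by blast
  interpret N: normal K G by (rule K(1))
  have subK: "subgroup K G" by (rule N.subgroup_axioms)
  define Q where "Q = G Mod K"
  have grpQ: "group Q" unfolding Q_def by (rule N.factorgroup_is_group)
  have carQ: "carrier Q = rcosets K" unfolding Q_def by (simp add: FactGroup_def)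
  have finQ: "finite (carrier Q)" using carQ K(2) by simp
  have cosets: "K #> g \<in> carrier Q" if "g \<in> carrier G" for g
    using that carQ unfolding RCOSETS_def by auto
  have alpha_car: "\<alpha> g \<in> carrier G" if "g \<in> carrier G" for g using that hom by (auto simp: hom_def)
  have alpha_mult: "\<alpha> (a \<otimes> b) = \<alpha> a \<otimes> \<alpha> b" if "a \<in> carrier G" "b \<in> carrier G" for a b
    using that hom by (simp add: hom_mult)
  have alpha_inv: "\<alpha> (inv a) = inv (\<alpha> a)" if "a \<in> carrier G" for a
    using that hom by (simp add: group_hom.hom_inv group_hom_def group_hom_axioms_def is_group)
  have coseq: "K #> a = K #> b \<longleftrightarrow> a \<otimes> inv b \<in> K" if "a \<in> carrier G" "b \<in> carrier G" for a b
  proof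
    assume "K #> a = K #> b"
    then have "a \<in> K #> b" using repr_independenceD[OF subK that(1)] by simp
    then show "a \<otimes> inv b \<in> K" using subgroup.rcos_module_imp[OF subK is_group that(2)] by blast
  next
    assume "a \<otimes> inv b \<in> K"
    then have "a \<in> K #> b" using subgroup.rcos_module_rev[OF subK is_group that(2) that(1)] by blast
    then show "K #> a = K #> b" using repr_independence[OF _ that(2) subK] by simp
  qed
  define phib where "phib Xc = K #> \<alpha> (SOME y. y \<in> Xc)" for Xc
  have phib: "phib (K #> g) = K #> \<alpha> g" if g: "g \<in> carrier G" for g
  proof -
    have "g \<in> K #> g" using rcos_self[OF g subK] .
    then have y: "(SOME y. y \<in> K #> g) \<in> K #> g" by (rule someI)
    define y where "y = (SOME y. y \<in> K #> g)"
    have yc: "y \<in> carrier G" using y y_def g subK by (metis r_coset_subset_G subgroup.subset subsetD)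
    have "y \<otimes> inv g \<in> K" using y y_def subgroup.rcos_module_imp[OF subK is_group g] by blast
    then have "\<alpha> (y \<otimes> inv g) \<in> K" using K(3) by blast
    then have "\<alpha> y \<otimes> inv (\<alpha> g) \<in> K" using yc g alpha_mult alpha_inv by simp
    then show ?thesis unfolding phib_def y_def[symmetric]
      using coseq alpha_car yc g by blast
  qed
  have rsum: "(K #> a) <#> (K #> b) = K #> (a \<otimes> b)" if "a \<in> carrier G" "b \<in> carrier G" for a b
    using N.rcos_sum that by blast
  have qinv: "inv\<^bsub>Q\<^esub> (K #> a) = K #> inv a" if a: "a \<in> carrier G" for a
  proof -
    have "(K #> inv a) \<otimes>\<^bsub>Q\<^esub> (K #> a) = \<one>\<^bsub>Q\<^esub>"
      using a rsum[of "inv a" a] subgroup.subset[OF subK] unfolding Q_def by simp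
    then show ?thesis using group.inv_equality[OF grpQ] a cosets by simp
  qed
  have phibhom: "phib \<in> hom Q Q"
  proof (rule homI)
    fix Xc assume "Xc \<in> carrier Q"
    then obtain g where g: "g \<in> carrier G" "Xc = K #> g" using carQ unfolding RCOSETS_def by auto
    then show "phib Xc \<in> carrier Q" using phib cosets alpha_car by simp
  next
    fix Xc Yc assume "Xc \<in> carrier Q" "Yc \<in> carrier Q"
    then obtain a b where ab: "a \<in> carrier G" "Xc = K #> a" "b \<in> carrier G" "Yc = K #> b"
      using carQ unfolding RCOSETS_def by auto
    show "phib (Xc \<otimes>\<^bsub>Q\<^esub> Yc) = phib Xc \<otimes>\<^bsub>Q\<^esub> phib Yc"
      using ab unfolding Q_def by (simp add: rsum phib alpha_car alpha_mult)
  qed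
  have twc: "tw Q phib (K #> g) (K #> y) = K #> (g \<otimes> y \<otimes> inv (\<alpha> g))"
    if "g \<in> carrier G" "y \<in> carrier G" for g y
    using that unfolding tw_def
    by (simp add: cosets phib qinv alpha_car rsum[symmetric]) (simp add: Q_def rsum alpha_car)
  have orb_eq: "orbit Q (tw Q phib) (K #> y) = (\<lambda>z. K #> z) ` (reid_rel G \<alpha> `` {y})"
    if y: "y \<in> carrier G" for y
  proof
    show "orbit Q (tw Q phib) (K #> y) \<subseteq> (\<lambda>z. K #> z) ` (reid_rel G \<alpha> `` {y})"
    proof
      fix Zc assume "Zc \<in> orbit Q (tw Q phib) (K #> y)"
      then obtain A where A: "A \<in> carrier Q" "Zc = tw Q phib A (K #> y)" unfolding orbit_def by auto
      then obtain g where g: "g \<in> carrier G" "A = K #> g" using carQ unfolding RCOSETS_def by auto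
      have "Zc = K #> (g \<otimes> y \<otimes> inv (\<alpha> g))" using A g twc y by simp
      moreover have "(y, g \<otimes> y \<otimes> inv (\<alpha> g)) \<in> reid_rel G \<alpha>"
        using g y alpha_car unfolding reid_rel_def by auto
      ultimately show "Zc \<in> (\<lambda>z. K #> z) ` (reid_rel G \<alpha> `` {y})" by blast
    qed
    show "(\<lambda>z. K #> z) ` (reid_rel G \<alpha> `` {y}) \<subseteq> orbit Q (tw Q phib) (K #> y)"
    proof
      fix Zc assume "Zc \<in> (\<lambda>z. K #> z) ` (reid_rel G \<alpha> `` {y})"
      then obtain z where z: "(y, z) \<in> reid_rel G \<alpha>" "Zc = K #> z" by auto
      then obtain g where g: "g \<in> carrier G" "z = g \<otimes> y \<otimes> inv (\<alpha> g)" unfolding reid_rel_def by auto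
      have "Zc = tw Q phib (K #> g) (K #> y)" using twc g y z by simp
      then show "Zc \<in> orbit Q (tw Q phib) (K #> y)" unfolding orbit_def using cosets g by blast
    qed
  qed
  have "orbits Q (carrier Q) (tw Q phib) \<subseteq> (\<lambda>C. (\<lambda>z. K #> z) ` C) ` reid_classes G \<alpha>"
  proof
    fix Ob assume "Ob \<in> orbits Q (carrier Q) (tw Q phib)"
    then obtain Xc where Xc: "Xc \<in> carrier Q" "Ob = orbit Q (tw Q phib) Xc" unfolding orbits_def by auto
    then obtain y where y: "y \<in> carrier G" "Xc = K #> y" using carQ unfolding RCOSETS_def by auto
    have "reid_rel G \<alpha> `` {y} \<in> reid_classes G \<alpha>"
      unfolding reid_classes_def using y(1) by (rule quotientI)
    then show "Ob \<in> (\<lambda>C. (\<lambda>z. K #> z) ` C) ` reid_classes G \<alpha>" using Xc y orb_eq by auto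
  qed
  then have orbr: "card (orbits Q (carrier Q) (tw Q phib)) \<le> r"
    unfolding r_def using fin by (meson card_image_le card_mono finite_imageI le_trans)
  have xQ: "K #> x \<in> carrier Q" using cosets x by simp
  have bound: "card (stabilizer Q (tw Q phib) (K #> x)) \<le> B"
    unfolding B_def by (rule group.landau[OF grpQ finQ phibhom xQ orbr])
  have instab: "K #> h [^] j \<in> stabilizer Q (tw Q phib) (K #> x)" for j :: nat
  proof -
    have hj: "h [^] j \<in> carrier G" using h by simp
    have "tw Q phib (K #> h [^] j) (K #> x) = K #> x"
      using twc[OF hj x] pow_stab[OF hom x h st] by simp
    then show ?thesis unfolding stabilizer_def using cosets hj by auto
  qed
  have injpow: "inj_on (\<lambda>j::nat. K #> h [^] j) {0..B}"
  proof (rule inj_onI)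
    fix i j assume i: "i \<in> {0..B}" and j: "j \<in> {0..B}" and eq: "K #> h [^] i = K #> h [^] j"
    show "i = j"
    proof (rule ccontr)
      assume "i \<noteq> j"
      then consider "i < j" | "j < i" by linarith
      then show False
      proof cases
        case 1
        have "h [^] j \<otimes> inv (h [^] i) \<in> K" using eq[symmetric] coseq[of "h [^] j" "h [^] i"] h by simp
        moreover have "h [^] j = h [^] (j - i) \<otimes> h [^] i" using 1 h by (simp add: nat_pow_mult)
        ultimately have "h [^] (j - i) \<in> K" using h by (simp add: m_assoc)
        moreover have "h [^] (j - i) \<in> S" unfolding S_def using 1 j by (intro imageI) auto
        ultimately show False using K(4) by blast
      next
        case 2
        have "h [^] i \<otimes> inv (h [^] j) \<in> K" using eq coseq[of "h [^] i" "h [^] j"] h by simp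
        moreover have "h [^] i = h [^] (i - j) \<otimes> h [^] j" using 2 h by (simp add: nat_pow_mult)
        ultimately have "h [^] (i - j) \<in> K" using h by (simp add: m_assoc)
        moreover have "h [^] (i - j) \<in> S" unfolding S_def using 2 i by (intro imageI) auto
        ultimately show False using K(4) by blast
      qed
    qed
  qed
  have "(\<lambda>j::nat. K #> h [^] j) ` {0..B} \<subseteq> stabilizer Q (tw Q phib) (K #> x)"
    using instab by auto
  moreover have "finite (stabilizer Q (tw Q phib) (K #> x))"
    using finQ unfolding stabilizer_def by simp
  ultimately have "card ((\<lambda>j::nat. K #> h [^] j) ` {0..B}) \<le> B"
    using bound by (meson card_mono le_trans)
  then show False using card_image[OF injpow] by simp
qed



lemma rep_class:
  assumes "equiv E r" "C \<in> E // r"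
  shows "(SOME x. x \<in> C) \<in> C" "(SOME x. x \<in> C) \<in> E" "r `` {SOME x. x \<in> C} = C"
proof -
  have ne: "C \<noteq> {}" using in_quotient_imp_non_empty[OF assms] .
  show c: "(SOME x. x \<in> C) \<in> C" using ne by (simp add: some_in_eq)
  show e: "(SOME x. x \<in> C) \<in> E" using c in_quotient_imp_subset[OF assms] by blast
  obtain x where x: "C = r `` {x}" "x \<in> E" using assms(2) by (rule quotientE)
  have "(x, SOME x. x \<in> C) \<in> r" using c x by blast
  then show "r `` {SOME x. x \<in> C} = C" using x assms(1) e by (metis eq_equiv_class_iff)
qed

lemma classes_nonempty:
  assumes "group G" "\<alpha> \<in> hom G G"
  shows "reid_classes G \<alpha> \<noteq> {}"
proof -
  have "\<one>\<^bsub>G\<^esub> \<in> carrier G" using assms(1) by (simp add: group.is_monoid monoid.one_closed)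
  then show ?thesis unfolding reid_classes_def by (auto simp: quotient_def)
qed

lemma reid_number_pos:
  assumes "group G" "\<alpha> \<in> hom G G"
  shows "reid_number G \<alpha> \<noteq> 0"
  using classes_nonempty[OF assms] unfolding reid_number_def
  by (auto simp: zero_enat_def)

lemma count_prod:
  assumes G: "group G" and F: "group F"
    and psi: "\<psi> \<in> hom (G \<times>\<times> F) (G \<times>\<times> F)" and al: "\<alpha> \<in> hom G G" and de: "\<delta> \<in> hom F F"
    and fstpsi: "\<And>g f. g \<in> carrier G \<Longrightarrow> f \<in> carrier F \<Longrightarrow> fst (\<psi> (g, f)) = \<alpha> g"
    and onef: "\<And>f. f \<in> carrier F \<Longrightarrow> \<psi> (\<one>\<^bsub>G\<^esub>, f) = (\<one>\<^bsub>G\<^esub>, \<delta> f)"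
    and stab: "finite (reid_classes G \<alpha>) \<Longrightarrow>
        \<forall>x\<in>carrier G. \<forall>g\<in>carrier G. g \<otimes>\<^bsub>G\<^esub> x \<otimes>\<^bsub>G\<^esub> inv\<^bsub>G\<^esub> (\<alpha> g) = x \<longrightarrow> g = \<one>\<^bsub>G\<^esub>"
  shows "reid_number (G \<times>\<times> F) \<psi> = reid_number G \<alpha> * reid_number F \<delta>"
proof -
  interpret G: group G by fact
  interpret F: group F by fact
  interpret P: group "G \<times>\<times> F" by (rule DirProd_group[OF G F])
  interpret hG: group_hom G G \<alpha> using al by (simp add: group_hom_def group_hom_axioms_def G.is_group)
  interpret hF: group_hom F F \<delta> using de by (simp add: group_hom_def group_hom_axioms_def F.is_group)
  define rP where "rP = reid_rel (G \<times>\<times> F) \<psi>"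
  define rG where "rG = reid_rel G \<alpha>"
  define rF where "rF = reid_rel F \<delta>"
  define cP where "cP = reid_classes (G \<times>\<times> F) \<psi>"
  define cG where "cG = reid_classes G \<alpha>"
  define cF where "cF = reid_classes F \<delta>"
  have eqP: "equiv (carrier G \<times> carrier F) rP" unfolding rP_def
    using P.reid_equiv[OF psi] by simp
  have eqG: "equiv (carrier G) rG" unfolding rG_def by (rule G.reid_equiv[OF al])
  have eqF: "equiv (carrier F) rF" unfolding rF_def by (rule F.reid_equiv[OF de])
  have cP': "cP = (carrier G \<times> carrier F) // rP" unfolding cP_def rP_def reid_classes_def by simp
  have cG': "cG = carrier G // rG" unfolding cG_def rG_def reid_classes_def by simp
  have cF': "cF = carrier F // rF" unfolding cF_def rF_def reid_classes_def by simp
  have psicar: "\<psi> p \<in> carrier G \<times> carrier F" if "p \<in> carrier G \<times> carrier F" for p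
    using psi that by (auto simp: hom_def Pi_iff)
  have relfst: "(x, x') \<in> rG" if hr: "((x, y), (x', y')) \<in> rP" for x y x' y'
  proof -
    obtain pp where pp: "pp \<in> carrier (G \<times>\<times> F)" "(x, y) \<in> carrier (G \<times>\<times> F)"
      "(x', y') = pp \<otimes>\<^bsub>G \<times>\<times> F\<^esub> (x, y) \<otimes>\<^bsub>G \<times>\<times> F\<^esub> inv\<^bsub>G \<times>\<times> F\<^esub> (\<psi> pp)"
    proof -
      have "(x, y) \<in> carrier (G \<times>\<times> F) \<and> (x', y') \<in> carrier (G \<times>\<times> F) \<and>
        (\<exists>pp\<in>carrier (G \<times>\<times> F). (x', y') = pp \<otimes>\<^bsub>G \<times>\<times> F\<^esub> (x, y) \<otimes>\<^bsub>G \<times>\<times> F\<^esub> inv\<^bsub>G \<times>\<times> F\<^esub> (\<psi> pp))"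
        using hr unfolding rP_def reid_rel_def by (simp only: mem_Collect_eq case_prod_conv)
      then show ?thesis using that by blast
    qed
    obtain g f where gf: "g \<in> carrier G" "f \<in> carrier F" "x \<in> carrier G" "y \<in> carrier F"
      "(x', y') = (g, f) \<otimes>\<^bsub>G \<times>\<times> F\<^esub> (x, y) \<otimes>\<^bsub>G \<times>\<times> F\<^esub> inv\<^bsub>G \<times>\<times> F\<^esub> (\<psi> (g, f))"
      using pp by (cases pp) auto
    obtain a b where ab: "\<psi> (g, f) = (a, b)" by fastforce
    have abc: "a \<in> carrier G" "b \<in> carrier F" using psicar[of "(g,f)"] gf ab by auto
    have a: "a = \<alpha> g" using fstpsi[OF gf(1,2)] ab by simp
    have "x' = g \<otimes>\<^bsub>G\<^esub> x \<otimes>\<^bsub>G\<^esub> inv\<^bsub>G\<^esub> (\<alpha> g)" using gf(5) ab abc a G F by simp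
    then show ?thesis using gf unfolding rG_def reid_rel_def by auto
  qed
  have relb: "((x, y), (g \<otimes>\<^bsub>G\<^esub> x \<otimes>\<^bsub>G\<^esub> inv\<^bsub>G\<^esub> (\<alpha> g), y \<otimes>\<^bsub>F\<^esub> inv\<^bsub>F\<^esub> (snd (\<psi> (g, \<one>\<^bsub>F\<^esub>))))) \<in> rP"
    if "x \<in> carrier G" "y \<in> carrier F" "g \<in> carrier G" for x y g
  proof -
    obtain a b where ab: "\<psi> (g, \<one>\<^bsub>F\<^esub>) = (a, b)" by fastforce
    have abc: "a \<in> carrier G" "b \<in> carrier F" using psicar[of "(g,\<one>\<^bsub>F\<^esub>)"] that ab by auto
    have a: "a = \<alpha> g" using fstpsi[OF that(3) F.one_closed] ab by simp
    have "(g \<otimes>\<^bsub>G\<^esub> x \<otimes>\<^bsub>G\<^esub> inv\<^bsub>G\<^esub> (\<alpha> g), y \<otimes>\<^bsub>F\<^esub> inv\<^bsub>F\<^esub> (snd (\<psi> (g, \<one>\<^bsub>F\<^esub>))))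
        = (g, \<one>\<^bsub>F\<^esub>) \<otimes>\<^bsub>G \<times>\<times> F\<^esub> (x, y) \<otimes>\<^bsub>G \<times>\<times> F\<^esub> inv\<^bsub>G \<times>\<times> F\<^esub> (\<psi> (g, \<one>\<^bsub>F\<^esub>))"
      using ab abc a that G F by simp
    moreover have "(g \<otimes>\<^bsub>G\<^esub> x \<otimes>\<^bsub>G\<^esub> inv\<^bsub>G\<^esub> (\<alpha> g), y \<otimes>\<^bsub>F\<^esub> inv\<^bsub>F\<^esub> (snd (\<psi> (g, \<one>\<^bsub>F\<^esub>)))) \<in> carrier (G \<times>\<times> F)"
      using ab abc that by simp
    moreover have "(x, y) \<in> carrier (G \<times>\<times> F)" "(g, \<one>\<^bsub>F\<^esub>) \<in> carrier (G \<times>\<times> F)" using that by auto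
    ultimately show ?thesis unfolding rP_def reid_rel_def mem_Collect_eq case_prod_conv by blast
  qed
  have relc: "((x, y), (x, f \<otimes>\<^bsub>F\<^esub> y \<otimes>\<^bsub>F\<^esub> inv\<^bsub>F\<^esub> (\<delta> f))) \<in> rP"
    if "x \<in> carrier G" "y \<in> carrier F" "f \<in> carrier F" for x y f
  proof -
    have "(x, f \<otimes>\<^bsub>F\<^esub> y \<otimes>\<^bsub>F\<^esub> inv\<^bsub>F\<^esub> (\<delta> f))
        = (\<one>\<^bsub>G\<^esub>, f) \<otimes>\<^bsub>G \<times>\<times> F\<^esub> (x, y) \<otimes>\<^bsub>G \<times>\<times> F\<^esub> inv\<^bsub>G \<times>\<times> F\<^esub> (\<psi> (\<one>\<^bsub>G\<^esub>, f))"
      using onef[OF that(3)] that G F by simp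
    moreover have "(x, f \<otimes>\<^bsub>F\<^esub> y \<otimes>\<^bsub>F\<^esub> inv\<^bsub>F\<^esub> (\<delta> f)) \<in> carrier (G \<times>\<times> F)"
      using that by simp
    moreover have "(x, y) \<in> carrier (G \<times>\<times> F)" "(\<one>\<^bsub>G\<^esub>, f) \<in> carrier (G \<times>\<times> F)" using that by auto
    ultimately show ?thesis unfolding rP_def reid_rel_def mem_Collect_eq case_prod_conv by blast
  qed
  have reld: "(y, y') \<in> rF" if fin: "finite cG" and r: "((x, y), (x, y')) \<in> rP" for x y y'
  proof -
    obtain pp where pp: "pp \<in> carrier (G \<times>\<times> F)" "(x, y) \<in> carrier (G \<times>\<times> F)" "(x, y') \<in> carrier (G \<times>\<times> F)"
      "(x, y') = pp \<otimes>\<^bsub>G \<times>\<times> F\<^esub> (x, y) \<otimes>\<^bsub>G \<times>\<times> F\<^esub> inv\<^bsub>G \<times>\<times> F\<^esub> (\<psi> pp)"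
    proof -
      have "(x, y) \<in> carrier (G \<times>\<times> F) \<and> (x, y') \<in> carrier (G \<times>\<times> F) \<and>
        (\<exists>pp\<in>carrier (G \<times>\<times> F). (x, y') = pp \<otimes>\<^bsub>G \<times>\<times> F\<^esub> (x, y) \<otimes>\<^bsub>G \<times>\<times> F\<^esub> inv\<^bsub>G \<times>\<times> F\<^esub> (\<psi> pp))"
        using r unfolding rP_def reid_rel_def by (simp only: mem_Collect_eq case_prod_conv)
      then show ?thesis using that by blast
    qed
    obtain g f where gf: "g \<in> carrier G" "f \<in> carrier F" "x \<in> carrier G" "y \<in> carrier F" "y' \<in> carrier F"
      "(x, y') = (g, f) \<otimes>\<^bsub>G \<times>\<times> F\<^esub> (x, y) \<otimes>\<^bsub>G \<times>\<times> F\<^esub> inv\<^bsub>G \<times>\<times> F\<^esub> (\<psi> (g, f))"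
      using pp by (cases pp) auto
    obtain a b where ab: "\<psi> (g, f) = (a, b)" by fastforce
    have abc: "a \<in> carrier G" "b \<in> carrier F" using psicar[of "(g,f)"] gf ab by auto
    have a: "a = \<alpha> g" using fstpsi[OF gf(1,2)] ab by simp
    have "x = g \<otimes>\<^bsub>G\<^esub> x \<otimes>\<^bsub>G\<^esub> inv\<^bsub>G\<^esub> (\<alpha> g)" using gf(6) ab abc a G F by simp
    then have g1: "g = \<one>\<^bsub>G\<^esub>" using stab fin gf unfolding cG_def by metis
    then have "(a, b) = (\<one>\<^bsub>G\<^esub>, \<delta> f)" using onef[OF gf(2)] ab by simp
    then have "y' = f \<otimes>\<^bsub>F\<^esub> y \<otimes>\<^bsub>F\<^esub> inv\<^bsub>F\<^esub> (\<delta> f)" using gf(6) ab g1 gf G F by simp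
    then show ?thesis using gf unfolding rF_def reid_rel_def by auto
  qed
  define repG where "repG C = (SOME x. x \<in> C)" for C :: "'a set"
  define repF where "repF D = (SOME x. x \<in> D)" for D :: "'c set"
  note rG = rep_class[OF eqG, folded cG', folded repG_def]
  note rF = rep_class[OF eqF, folded cF', folded repF_def]
  define Phi where "Phi CD = rP `` {(repG (fst CD), repF (snd CD))}" for CD
  have Phi_in: "Phi (C, D) \<in> cP" if "C \<in> cG" "D \<in> cF" for C D
    unfolding Phi_def cP' using rG(2)[OF that(1)] rF(2)[OF that(2)] by (auto intro: quotientI)
  have injG: "C = C'" if "C \<in> cG" "D \<in> cF" "C' \<in> cG" "D' \<in> cF" "Phi (C, D) = Phi (C', D')"
    for C D C' D'
  proof -
    have "((repG C, repF D), (repG C', repF D')) \<in> rP"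
      using that eq_equiv_class_iff[OF eqP] rG(2) rF(2) unfolding Phi_def by auto
    then have "(repG C, repG C') \<in> rG" by (rule relfst)
    then show ?thesis using rG(3)[OF that(1)] rG(3)[OF that(3)] eq_equiv_class_iff[OF eqG] rG(2) that
      by metis
  qed
  have fin_cases: "cP \<noteq> {}" "cG \<noteq> {}" "cF \<noteq> {}"
    using classes_nonempty[OF P.is_group psi] classes_nonempty[OF G al] classes_nonempty[OF F de]
    unfolding cP_def cG_def cF_def by auto
  show ?thesis
  proof (cases "finite cG")
    case finG: True
    have bij: "bij_betw Phi (cG \<times> cF) cP"
    proof (rule bij_betwI')
      fix CD CD' assume CD: "CD \<in> cG \<times> cF" and CD': "CD' \<in> cG \<times> cF"
      obtain C D where C: "CD = (C, D)" "C \<in> cG" "D \<in> cF" using CD by auto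
      obtain C' D' where C': "CD' = (C', D')" "C' \<in> cG" "D' \<in> cF" using CD' by auto
      show "(Phi CD = Phi CD') = (CD = CD')"
      proof
        assume eq: "Phi CD = Phi CD'"
        have CC: "C = C'" using injG[OF C(2,3) C'(2,3)] eq C C' by simp
        have "((repG C, repF D), (repG C, repF D')) \<in> rP"
          using eq CC C C' eq_equiv_class_iff[OF eqP] rG(2) rF(2) unfolding Phi_def by auto
        then have "(repF D, repF D') \<in> rF" using reld[OF finG] by blast
        then have "D = D'" using rF(3)[OF C(3)] rF(3)[OF C'(3)] eq_equiv_class_iff[OF eqF] rF(2) C C'
          by metis
        then show "CD = CD'" using CC C C' by simp
      qed simp
    next
      fix CD assume "CD \<in> cG \<times> cF"
      then show "Phi CD \<in> cP" using Phi_in by auto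
    next
      fix Cl assume "Cl \<in> cP"
      then obtain p where p: "Cl = rP `` {p}" "p \<in> carrier G \<times> carrier F" unfolding cP' by (rule quotientE)
      obtain x y where xy: "p = (x, y)" "x \<in> carrier G" "y \<in> carrier F" using p by auto
      define C where "C = rG `` {x}"
      have C: "C \<in> cG" unfolding C_def cG' using xy by (auto intro: quotientI)
      have "(x, repG C) \<in> rG" using rG(1)[OF C] unfolding C_def by blast
      then obtain g where g: "g \<in> carrier G" "repG C = g \<otimes>\<^bsub>G\<^esub> x \<otimes>\<^bsub>G\<^esub> inv\<^bsub>G\<^esub> (\<alpha> g)"
        unfolding rG_def reid_rel_def by auto
      define y' where "y' = y \<otimes>\<^bsub>F\<^esub> inv\<^bsub>F\<^esub> (snd (\<psi> (g, \<one>\<^bsub>F\<^esub>)))"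
      have y'c: "y' \<in> carrier F" unfolding y'_def using psicar[of "(g, \<one>\<^bsub>F\<^esub>)"] g xy by auto
      have r1: "((x, y), (repG C, y')) \<in> rP" using relb[OF xy(2,3) g(1)] g unfolding y'_def by simp
      define D where "D = rF `` {y'}"
      have D: "D \<in> cF" unfolding D_def cF' using y'c by (auto intro: quotientI)
      have "(y', repF D) \<in> rF" using rF(1)[OF D] unfolding D_def by blast
      then obtain f where f: "f \<in> carrier F" "repF D = f \<otimes>\<^bsub>F\<^esub> y' \<otimes>\<^bsub>F\<^esub> inv\<^bsub>F\<^esub> (\<delta> f)"
        unfolding rF_def reid_rel_def by auto
      have r2: "((repG C, y'), (repG C, repF D)) \<in> rP" using relc[OF rG(2)[OF C] y'c f(1)] f by simp
      have "((x, y), (repG C, repF D)) \<in> rP" using r1 r2 eqP by (meson equivE transE)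
      then have "Cl = Phi (C, D)" unfolding Phi_def using p xy eq_equiv_class_iff[OF eqP] rG(2)[OF C] rF(2)[OF D]
        by auto
      then show "\<exists>CD\<in>cG \<times> cF. Cl = Phi CD" using C D by blast
    qed
    show ?thesis
    proof (cases "finite cF")
      case finF: True
      have "finite cP" "card cP = card cG * card cF"
        using bij finG finF bij_betw_finite bij_betw_same_card card_cartesian_product by fastforce+
      then show ?thesis using finG finF unfolding reid_number_def cP_def[symmetric] cG_def[symmetric] cF_def[symmetric]
        by simp
    next
      case infF: False
      have "infinite (cG \<times> cF)" using infF fin_cases by (simp add: finite_cartesian_product_iff)
      then have "infinite cP" using bij bij_betw_finite by blast
      moreover have "card cG > 0" using finG fin_cases by (simp add: card_gt_0_iff)
      ultimately show ?thesis using finG infF fin_cases unfolding reid_number_def cP_def[symmetric] cG_def[symmetric] cF_def[symmetric]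
        by (simp add: imult_infinity_right zero_enat_def)
    qed
  next
    case infG: False
    obtain D0 where D0: "D0 \<in> cF" using fin_cases by blast
    have "inj_on (\<lambda>C. Phi (C, D0)) cG"
      using injG D0 by (intro inj_onI) blast
    moreover have "(\<lambda>C. Phi (C, D0)) ` cG \<subseteq> cP" using Phi_in D0 by blast
    ultimately have "infinite cP" using infG by (meson finite_imageD finite_subset)
    moreover have "reid_number F \<delta> \<noteq> 0" by (rule reid_number_pos[OF F de])
    ultimately show ?thesis using infG unfolding reid_number_def cP_def[symmetric] cG_def[symmetric]
      by (simp add: imult_infinity zero_less_iff_neq_zero)
  qed
qed



lemma fst_trivial:
  assumes G: "group G" and F: "group F" and tf: "torsion_free G"
    and gen: "generate F (torsion_elems F) = carrier F"
    and psi: "\<psi> \<in> hom (G \<times>\<times> F) (G \<times>\<times> F)" and f: "f \<in> carrier F"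
  shows "fst (\<psi> (\<one>\<^bsub>G\<^esub>, f)) = \<one>\<^bsub>G\<^esub>"
proof -
  interpret G: group G by fact
  interpret F: group F by fact
  interpret P: group "G \<times>\<times> F" by (rule DirProd_group[OF G F])
  define chi where "chi a = fst (\<psi> (\<one>\<^bsub>G\<^esub>, a))" for a
  have psicar: "\<psi> p \<in> carrier G \<times> carrier F" if "p \<in> carrier G \<times> carrier F" for p
    using psi that by (auto simp: hom_def Pi_iff)
  have chihom: "chi \<in> hom F G"
  proof (rule homI)
    fix a assume "a \<in> carrier F"
    then show "chi a \<in> carrier G" unfolding chi_def using psicar[of "(\<one>\<^bsub>G\<^esub>, a)"] by auto
  next
    fix a b assume ab: "a \<in> carrier F" "b \<in> carrier F"
    have "\<psi> (\<one>\<^bsub>G\<^esub>, a \<otimes>\<^bsub>F\<^esub> b) = \<psi> ((\<one>\<^bsub>G\<^esub>, a) \<otimes>\<^bsub>G \<times>\<times> F\<^esub> (\<one>\<^bsub>G\<^esub>, b))" by simp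
    also have "\<dots> = \<psi> (\<one>\<^bsub>G\<^esub>, a) \<otimes>\<^bsub>G \<times>\<times> F\<^esub> \<psi> (\<one>\<^bsub>G\<^esub>, b)"
      by (rule hom_mult[OF psi]) (use ab in auto)
    finally show "chi (a \<otimes>\<^bsub>F\<^esub> b) = chi a \<otimes>\<^bsub>G\<^esub> chi b" unfolding chi_def by (simp add: mult_DirProd')
  qed
  interpret hc: group_hom F G chi using chihom by (simp add: group_hom_def group_hom_axioms_def G F)
  have tors: "torsion_elems F \<subseteq> kernel F G chi"
  proof
    fix a assume "a \<in> torsion_elems F"
    then obtain n :: nat where n: "a \<in> carrier F" "n > 0" "a [^]\<^bsub>F\<^esub> n = \<one>\<^bsub>F\<^esub>"
      unfolding torsion_elems_def by auto
    have "chi a [^]\<^bsub>G\<^esub> n = \<one>\<^bsub>G\<^esub>" using hc.hom_nat_pow[OF n(1), of n] n(3) by simp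
    then have "chi a \<in> torsion_elems G" using n hc.hom_closed unfolding torsion_elems_def by auto
    then have "chi a = \<one>\<^bsub>G\<^esub>" using tf unfolding torsion_free_def by auto
    then show "a \<in> kernel F G chi" using n unfolding kernel_def by auto
  qed
  have "carrier F \<subseteq> kernel F G chi"
    using F.generate_subgroup_incl[OF tors hc.subgroup_kernel] gen by simp
  then show ?thesis using f unfolding kernel_def chi_def by auto
qed

lemma aut_decomp:
  assumes G: "group G" and F: "group F" and tf: "torsion_free G"
    and gen: "generate F (torsion_elems F) = carrier F"
    and psi: "\<psi> \<in> iso (G \<times>\<times> F) (G \<times>\<times> F)"
  defines "\<alpha> \<equiv> \<lambda>g. fst (\<psi> (g, \<one>\<^bsub>F\<^esub>))" and "\<delta> \<equiv> \<lambda>f. snd (\<psi> (\<one>\<^bsub>G\<^esub>, f))"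
  shows "\<alpha> \<in> iso G G" "\<delta> \<in> iso F F"
    "\<And>g f. g \<in> carrier G \<Longrightarrow> f \<in> carrier F \<Longrightarrow> fst (\<psi> (g, f)) = \<alpha> g"
    "\<And>f. f \<in> carrier F \<Longrightarrow> \<psi> (\<one>\<^bsub>G\<^esub>, f) = (\<one>\<^bsub>G\<^esub>, \<delta> f)"
proof -
  interpret G: group G by fact
  interpret F: group F by fact
  interpret P: group "G \<times>\<times> F" by (rule DirProd_group[OF G F])
  have psih: "\<psi> \<in> hom (G \<times>\<times> F) (G \<times>\<times> F)" using psi by (simp add: iso_def)
  have psibij: "bij_betw \<psi> (carrier G \<times> carrier F) (carrier G \<times> carrier F)" using psi by (simp add: iso_def)
  have psicar: "\<psi> p \<in> carrier G \<times> carrier F" if "p \<in> carrier G \<times> carrier F" for p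
    using psih that by (auto simp: hom_def Pi_iff)
  have psimul: "\<psi> (p \<otimes>\<^bsub>G \<times>\<times> F\<^esub> q) = \<psi> p \<otimes>\<^bsub>G \<times>\<times> F\<^esub> \<psi> q"
    if "p \<in> carrier G \<times> carrier F" "q \<in> carrier G \<times> carrier F" for p q
    using psih that by (simp add: hom_mult)
  have ft: "fst (\<psi> (\<one>\<^bsub>G\<^esub>, f)) = \<one>\<^bsub>G\<^esub>" if "f \<in> carrier F" for f
    by (rule fst_trivial[OF G F tf gen psih that])
  show onef: "\<psi> (\<one>\<^bsub>G\<^esub>, f) = (\<one>\<^bsub>G\<^esub>, \<delta> f)" if "f \<in> carrier F" for f
    using ft[OF that] unfolding \<delta>_def by (metis prod.collapse)
  show fstpsi: "fst (\<psi> (g, f)) = \<alpha> g" if gf: "g \<in> carrier G" "f \<in> carrier F" for g f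
  proof -
    have "\<psi> (g, f) = \<psi> ((g, \<one>\<^bsub>F\<^esub>) \<otimes>\<^bsub>G \<times>\<times> F\<^esub> (\<one>\<^bsub>G\<^esub>, f))" using gf by simp
    also have "\<dots> = \<psi> (g, \<one>\<^bsub>F\<^esub>) \<otimes>\<^bsub>G \<times>\<times> F\<^esub> \<psi> (\<one>\<^bsub>G\<^esub>, f)" by (rule psimul) (use gf in auto)
    finally have "fst (\<psi> (g, f)) = \<alpha> g \<otimes>\<^bsub>G\<^esub> fst (\<psi> (\<one>\<^bsub>G\<^esub>, f))"
      unfolding \<alpha>_def by (simp add: mult_DirProd')
    then show ?thesis using ft[OF gf(2)] psicar[of "(g, \<one>\<^bsub>F\<^esub>)"] gf unfolding \<alpha>_def by auto
  qed
  have alcar: "\<alpha> g \<in> carrier G" if "g \<in> carrier G" for g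
    using psicar[of "(g, \<one>\<^bsub>F\<^esub>)"] that unfolding \<alpha>_def by auto
  have decar: "\<delta> f \<in> carrier F" if "f \<in> carrier F" for f
    using psicar[of "(\<one>\<^bsub>G\<^esub>, f)"] that unfolding \<delta>_def by auto
  have alhom: "\<alpha> \<in> hom G G"
  proof (rule homI)
    show "\<alpha> x \<in> carrier G" if "x \<in> carrier G" for x using alcar that .
    fix a b assume ab: "a \<in> carrier G" "b \<in> carrier G"
    have "\<psi> (a \<otimes>\<^bsub>G\<^esub> b, \<one>\<^bsub>F\<^esub>) = \<psi> ((a, \<one>\<^bsub>F\<^esub>) \<otimes>\<^bsub>G \<times>\<times> F\<^esub> (b, \<one>\<^bsub>F\<^esub>))" by simp
    also have "\<dots> = \<psi> (a, \<one>\<^bsub>F\<^esub>) \<otimes>\<^bsub>G \<times>\<times> F\<^esub> \<psi> (b, \<one>\<^bsub>F\<^esub>)" by (rule psimul) (use ab in auto)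
    finally show "\<alpha> (a \<otimes>\<^bsub>G\<^esub> b) = \<alpha> a \<otimes>\<^bsub>G\<^esub> \<alpha> b" unfolding \<alpha>_def by (simp add: mult_DirProd')
  qed
  have dehom: "\<delta> \<in> hom F F"
  proof (rule homI)
    show "\<delta> x \<in> carrier F" if "x \<in> carrier F" for x using decar that .
    fix a b assume ab: "a \<in> carrier F" "b \<in> carrier F"
    have "\<psi> (\<one>\<^bsub>G\<^esub>, a \<otimes>\<^bsub>F\<^esub> b) = \<psi> ((\<one>\<^bsub>G\<^esub>, a) \<otimes>\<^bsub>G \<times>\<times> F\<^esub> (\<one>\<^bsub>G\<^esub>, b))" by simp
    also have "\<dots> = \<psi> (\<one>\<^bsub>G\<^esub>, a) \<otimes>\<^bsub>G \<times>\<times> F\<^esub> \<psi> (\<one>\<^bsub>G\<^esub>, b)" by (rule psimul) (use ab in auto)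
    finally show "\<delta> (a \<otimes>\<^bsub>F\<^esub> b) = \<delta> a \<otimes>\<^bsub>F\<^esub> \<delta> b" unfolding \<delta>_def by (simp add: mult_DirProd')
  qed
  interpret hA: group_hom G G \<alpha> using alhom by (simp add: group_hom_def group_hom_axioms_def G)
  define \<psi>' where "\<psi>' = inv_into (carrier (G \<times>\<times> F)) \<psi>"
  have psi'iso: "\<psi>' \<in> iso (G \<times>\<times> F) (G \<times>\<times> F)" unfolding \<psi>'_def by (rule P.iso_set_sym[OF psi])
  have psi'h: "\<psi>' \<in> hom (G \<times>\<times> F) (G \<times>\<times> F)" using psi'iso by (simp add: iso_def)
  have desurj: "\<exists>f'\<in>carrier F. \<delta> f' = f" if f: "f \<in> carrier F" for f
  proof -
    have inimg: "(\<one>\<^bsub>G\<^esub>, f) \<in> \<psi> ` (carrier G \<times> carrier F)" using psibij f by (simp add: bij_betw_def)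
    have p'c: "\<psi>' (\<one>\<^bsub>G\<^esub>, f) \<in> carrier G \<times> carrier F"
      unfolding \<psi>'_def using inimg by (simp add: inv_into_into)
    have "fst (\<psi>' (\<one>\<^bsub>G\<^esub>, f)) = \<one>\<^bsub>G\<^esub>" by (rule fst_trivial[OF G F tf gen psi'h f])
    moreover have "snd (\<psi>' (\<one>\<^bsub>G\<^esub>, f)) \<in> carrier F" using p'c by (simp add: mem_Times_iff)
    ultimately obtain f' where f': "\<psi>' (\<one>\<^bsub>G\<^esub>, f) = (\<one>\<^bsub>G\<^esub>, f')" "f' \<in> carrier F"
      by (intro that[of "snd (\<psi>' (\<one>\<^bsub>G\<^esub>, f))"]) (simp_all add: prod_eq_iff)
    have "\<psi> (\<psi>' (\<one>\<^bsub>G\<^esub>, f)) = (\<one>\<^bsub>G\<^esub>, f)" unfolding \<psi>'_def using inimg by (simp add: f_inv_into_f)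
    then have "\<psi> (\<one>\<^bsub>G\<^esub>, f') = (\<one>\<^bsub>G\<^esub>, f)" using f' by simp
    then show ?thesis using f' unfolding \<delta>_def by (metis snd_conv)
  qed
  have psiinj: "inj_on \<psi> (carrier G \<times> carrier F)" using psibij by (simp add: bij_betw_def)
  show "\<delta> \<in> iso F F"
  proof -
    have "inj_on \<delta> (carrier F)"
    proof (rule inj_onI)
      fix a b assume ab: "a \<in> carrier F" "b \<in> carrier F" "\<delta> a = \<delta> b"
      then have "\<psi> (\<one>\<^bsub>G\<^esub>, a) = \<psi> (\<one>\<^bsub>G\<^esub>, b)" using onef by simp
      then show "a = b" using psiinj ab by (auto dest: inj_onD)
    qed
    moreover have "\<delta> ` carrier F = carrier F" using desurj decar by blast
    ultimately show ?thesis using dehom by (simp add: iso_def bij_betw_def)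
  qed
  show "\<alpha> \<in> iso G G"
  proof -
    have "inj_on \<alpha> (carrier G)"
    proof (rule inj_onI)
      fix a b assume ab: "a \<in> carrier G" "b \<in> carrier G" "\<alpha> a = \<alpha> b"
      define u where "u = a \<otimes>\<^bsub>G\<^esub> inv\<^bsub>G\<^esub> b"
      have uc: "u \<in> carrier G" unfolding u_def using ab by simp
      have au: "\<alpha> u = \<one>\<^bsub>G\<^esub>" unfolding u_def using ab by (simp add: hA.hom_inv)
      have pc: "\<psi> (u, \<one>\<^bsub>F\<^esub>) \<in> carrier G \<times> carrier F" using psicar uc by simp
      have fu: "fst (\<psi> (u, \<one>\<^bsub>F\<^esub>)) = \<one>\<^bsub>G\<^esub>" using au unfolding \<alpha>_def .
      obtain c where c: "\<psi> (u, \<one>\<^bsub>F\<^esub>) = (\<one>\<^bsub>G\<^esub>, c)" "c \<in> carrier F"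
        using pc fu by (intro that[of "snd (\<psi> (u, \<one>\<^bsub>F\<^esub>))"]) (simp_all add: prod_eq_iff mem_Times_iff)
      obtain f where f: "f \<in> carrier F" "\<delta> f = c" using desurj[OF c(2)] by blast
      have "\<psi> (\<one>\<^bsub>G\<^esub>, f) = \<psi> (u, \<one>\<^bsub>F\<^esub>)" using onef[OF f(1)] f c by simp
      then have "(\<one>\<^bsub>G\<^esub>, f) = (u, \<one>\<^bsub>F\<^esub>)" using psiinj f uc by (auto dest: inj_onD)
      then have "u = \<one>\<^bsub>G\<^esub>" by simp
      moreover have "a = u \<otimes>\<^bsub>G\<^esub> b" unfolding u_def using ab by (simp add: G.m_assoc)
      ultimately show "a = b" using ab by simp
    qed
    moreover have "\<alpha> ` carrier G = carrier G"
    proof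
      show "\<alpha> ` carrier G \<subseteq> carrier G" using alcar by blast
      show "carrier G \<subseteq> \<alpha> ` carrier G"
      proof
        fix g assume g: "g \<in> carrier G"
        have "(g, \<one>\<^bsub>F\<^esub>) \<in> \<psi> ` (carrier G \<times> carrier F)" using psibij g by (simp add: bij_betw_def)
        then obtain a b where ab: "a \<in> carrier G" "b \<in> carrier F" "\<psi> (a, b) = (g, \<one>\<^bsub>F\<^esub>)" by auto
        then have "\<alpha> a = g" using fstpsi[OF ab(1,2)] by simp
        then show "g \<in> \<alpha> ` carrier G" using ab by blast
      qed
    qed
    ultimately show ?thesis using alhom by (simp add: iso_def bij_betw_def)
  qed
qed

theorem mainTheorem13:
  fixes G :: "'a monoid" and F :: "'b monoid"
  assumes "group G" and "fin_gen_group G" and "torsion_free G" and "residually_finite G"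
    and "group F" and "generate F (torsion_elems F) = carrier F"
  shows "spec_R (G \<times>\<times> F) = set_prod (spec_R G) (spec_R F)"
proof -
  note G = assms(1) and fg = assms(2) and tf = assms(3) and rf = assms(4) and F = assms(5) and gen = assms(6)
  have stab: "\<forall>x\<in>carrier G. \<forall>g\<in>carrier G. g \<otimes>\<^bsub>G\<^esub> x \<otimes>\<^bsub>G\<^esub> inv\<^bsub>G\<^esub> (\<alpha> g) = x \<longrightarrow> g = \<one>\<^bsub>G\<^esub>"
    if "\<alpha> \<in> hom G G" "finite (reid_classes G \<alpha>)" for \<alpha>
    using group.stab_trivial[OF G fg rf tf that] by blast
  show ?thesis
  proof
    show "spec_R (G \<times>\<times> F) \<subseteq> set_prod (spec_R G) (spec_R F)"
    proof
      fix n assume "n \<in> spec_R (G \<times>\<times> F)"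
      then obtain \<psi> where psi: "\<psi> \<in> iso (G \<times>\<times> F) (G \<times>\<times> F)" "n = reid_number (G \<times>\<times> F) \<psi>"
        unfolding spec_R_def by auto
      define \<alpha> where "\<alpha> = (\<lambda>g. fst (\<psi> (g, \<one>\<^bsub>F\<^esub>)))"
      define \<delta> where "\<delta> = (\<lambda>f. snd (\<psi> (\<one>\<^bsub>G\<^esub>, f)))"
      note dec = aut_decomp[OF G F tf gen psi(1), folded \<alpha>_def \<delta>_def]
      have ah: "\<alpha> \<in> hom G G" "\<delta> \<in> hom F F" using dec(1,2) by (auto simp: iso_def)
      have fp: "\<And>g f. g \<in> carrier G \<Longrightarrow> f \<in> carrier F \<Longrightarrow> fst (\<psi> (g, f)) = \<alpha> g"
        using dec(3) unfolding \<alpha>_def by simp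
      have of: "\<And>f. f \<in> carrier F \<Longrightarrow> \<psi> (\<one>\<^bsub>G\<^esub>, f) = (\<one>\<^bsub>G\<^esub>, \<delta> f)"
        using dec(4) unfolding \<delta>_def by simp
      have psih: "\<psi> \<in> hom (G \<times>\<times> F) (G \<times>\<times> F)" using psi(1) by (simp add: iso_def)
      have "n = reid_number G \<alpha> * reid_number F \<delta>"
        unfolding psi(2) by (rule count_prod[OF G F psih ah fp of stab[OF ah(1)]])
      moreover have "reid_number G \<alpha> \<in> spec_R G" "reid_number F \<delta> \<in> spec_R F"
        using dec(1,2) unfolding spec_R_def by auto
      ultimately show "n \<in> set_prod (spec_R G) (spec_R F)" unfolding set_prod_def by blast
    qed
    show "set_prod (spec_R G) (spec_R F) \<subseteq> spec_R (G \<times>\<times> F)"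
    proof
      fix n assume "n \<in> set_prod (spec_R G) (spec_R F)"
      then obtain \<alpha> \<delta> where ad: "\<alpha> \<in> iso G G" "\<delta> \<in> iso F F"
        "n = reid_number G \<alpha> * reid_number F \<delta>"
        unfolding set_prod_def spec_R_def by auto
      define \<psi> where "\<psi> = (\<lambda>(x, y). (\<alpha> x, \<delta> y))"
      have psi: "\<psi> \<in> iso (G \<times>\<times> F) (G \<times>\<times> F)" unfolding \<psi>_def using iso_paired2[OF G F] ad by blast
      have ah: "\<alpha> \<in> hom G G" "\<delta> \<in> hom F F" using ad by (auto simp: iso_def)
      have a1: "\<alpha> \<one>\<^bsub>G\<^esub> = \<one>\<^bsub>G\<^esub>" using ah G by (simp add: group_hom.hom_one group_hom_def group_hom_axioms_def)
      have psih: "\<psi> \<in> hom (G \<times>\<times> F) (G \<times>\<times> F)" using psi by (simp add: iso_def)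
      have fp: "\<And>g f. g \<in> carrier G \<Longrightarrow> f \<in> carrier F \<Longrightarrow> fst (\<psi> (g, f)) = \<alpha> g"
        unfolding \<psi>_def by simp
      have of: "\<And>f. f \<in> carrier F \<Longrightarrow> \<psi> (\<one>\<^bsub>G\<^esub>, f) = (\<one>\<^bsub>G\<^esub>, \<delta> f)"
        unfolding \<psi>_def using a1 by simp
      have "reid_number (G \<times>\<times> F) \<psi> = reid_number G \<alpha> * reid_number F \<delta>"
        by (rule count_prod[OF G F psih ah fp of stab[OF ah(1)]])
      then have "n = reid_number (G \<times>\<times> F) \<psi>" using ad(3) by simp
      then show "n \<in> spec_R (G \<times>\<times> F)" using psi unfolding spec_R_def by blast
    qed
  qed
qed


end
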